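(* Let $A_1,A_2,B_1,B_2\in\mathbb T$ and let $\boldsymbol\mu$ be a ratio set. Assume $A_1\prec^{\boldsymbol\mu}A_2$, $B_1\prec^{\boldsymbol\mu}B_2$, and $\boldsymbol\mu$ witnesses $B_2$. Then $A_1B_1\prec^{\boldsymbol\mu}A_2B_2$.
   Context: $\mathbb T$ is the field of real grid-based transseries over the totally ordered group $\mathfrak G$ of transmonomials; $\operatorname{mag}T$ is the dominant monomial of $T\ne0$. A ratio set is a finite $\boldsymbol\mu\subset\{\mathfrak g\in\mathfrak G:\mathfrak g\prec1\}$; $\boldsymbol\mu^*$ (resp. $\boldsymbol\mu^+$) is the set of products of zero or more (resp. one or more) elements of $\boldsymbol\mu$. Monomials: $\mathfrak m\prec^{\boldsymbol\mu}\mathfrak n$ iff $\mathfrak m/\mathfrak n\in\boldsymbol\mu^+$. Transseries: $A\prec^{\boldsymbol\mu}B$ iff every $\mathfrak a\in\operatorname{supp}A$ satisfies $\mathfrak a\prec^{\boldsymbol\mu}\mathfrak b$ for some $\mathfrak b\in\operatorname{supp}B$. $\boldsymbol\mu$ witnesses nonzero $T$ iff $\operatorname{supp}T\subseteq(\operatorname{mag}T)\boldsymbol\mu^*$. *)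

theory Defs
  imports Complex_Main
begin

text \<open>Monomials form a totally ordered abelian group, written additively:
  the product of monomials is +, and m \<prec> n is m < n (so m \<prec> 1 is m < 0).\<close>

definition supp :: "('g \<Rightarrow> real) \<Rightarrow> 'g set" where
  "supp A = {g. A g \<noteq> 0}"

definition ratio_set :: "'g::linordered_ab_group_add set \<Rightarrow> bool" where
  "ratio_set mu \<longleftrightarrow> finite mu \<and> mu \<subseteq> {g. g < 0}"

definition mstar :: "'g::linordered_ab_group_add set \<Rightarrow> 'g set" where
  "mstar mu = {sum_list xs | xs. set xs \<subseteq> mu}"

definition mplus :: "'g::linordered_ab_group_add set \<Rightarrow> 'g set" where
  "mplus mu = {sum_list xs | xs. set xs \<subseteq> mu \<and> xs \<noteq> []}"

definition grid_based :: "'g::linordered_ab_group_add set \<Rightarrow> bool" where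
  "grid_based S \<longleftrightarrow> (\<exists>mu n. ratio_set mu \<and> S \<subseteq> {n + m | m. m \<in> mstar mu})"

definition gb_series :: "('g::linordered_ab_group_add \<Rightarrow> real) \<Rightarrow> bool" where
  "gb_series A \<longleftrightarrow> grid_based (supp A)"

text \<open>Product of series (Cauchy product; the sum is finite for grid-based series).\<close>
definition ser_mult :: "('g::linordered_ab_group_add \<Rightarrow> real) \<Rightarrow> ('g \<Rightarrow> real) \<Rightarrow> 'g \<Rightarrow> real" where
  "ser_mult A B g = (\<Sum>p\<in>{(a, b). a \<in> supp A \<and> b \<in> supp B \<and> a + b = g}. A (fst p) * B (snd p))"

definition mag :: "('g::linordered_ab_group_add \<Rightarrow> real) \<Rightarrow> 'g" where
  "mag T = (GREATEST g. g \<in> supp T)"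

definition mono_prec :: "'g::linordered_ab_group_add set \<Rightarrow> 'g \<Rightarrow> 'g \<Rightarrow> bool" where
  "mono_prec mu m n \<longleftrightarrow> m - n \<in> mplus mu"

definition ser_prec :: "'g::linordered_ab_group_add set \<Rightarrow> ('g \<Rightarrow> real) \<Rightarrow> ('g \<Rightarrow> real) \<Rightarrow> bool" where
  "ser_prec mu A B \<longleftrightarrow> (\<forall>a\<in>supp A. \<exists>b\<in>supp B. mono_prec mu a b)"

definition witnesses :: "'g::linordered_ab_group_add set \<Rightarrow> ('g \<Rightarrow> real) \<Rightarrow> bool" where
  "witnesses mu T \<longleftrightarrow> T \<noteq> (\<lambda>_. 0) \<and> supp T \<subseteq> {mag T + m | m. m \<in> mstar mu}"

end

theory Submission
  imports Defs
begin

lemma mstar_add: "x \<in> mstar mu \<Longrightarrow> y \<in> mstar mu \<Longrightarrow> x + y \<in> mstar mu"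
proof -
  assume "x \<in> mstar mu" "y \<in> mstar mu"
  then obtain xs ys where "set xs \<subseteq> mu" "x = sum_list xs" "set ys \<subseteq> mu" "y = sum_list ys"
    unfolding mstar_def by auto
  then show ?thesis unfolding mstar_def by (intro CollectI exI[of _ "xs @ ys"]) auto
qed

lemma mplus_add: "x \<in> mplus mu \<Longrightarrow> y \<in> mstar mu \<Longrightarrow> x + y \<in> mplus mu"
proof -
  assume "x \<in> mplus mu" "y \<in> mstar mu"
  then obtain xs ys where "set xs \<subseteq> mu" "x = sum_list xs" "xs \<noteq> []" "set ys \<subseteq> mu" "y = sum_list ys"
    unfolding mstar_def mplus_def by auto
  then show ?thesis unfolding mplus_def by (intro CollectI exI[of _ "xs @ ys"]) auto
qed

lemma mstar_0: "0 \<in> mstar mu"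
  unfolding mstar_def by (auto intro!: exI[of _ "[]"])

lemma sum_list_nonpos': "set xs \<subseteq> {g. g < 0} \<Longrightarrow> sum_list xs \<le> (0::'g::linordered_ab_group_add)"
  by (induction xs) (auto simp: add_nonpos_nonpos)

lemma mstar_le0: "ratio_set mu \<Longrightarrow> x \<in> mstar mu \<Longrightarrow> x \<le> 0"
  unfolding mstar_def ratio_set_def using sum_list_nonpos' by blast

lemma rep_mono: assumes g: "(g::'g::linordered_ab_group_add) \<le> 0" and nn: "n \<le> n'" shows
   "sum_list (replicate n' g) \<le> sum_list (replicate n g)"
  using nn
proof (induction n' rule: dec_induct)
  case base then show ?case by simp
next
  case (step k)
  show ?case using add_decreasing[OF g step(3)] by simp
qed

lemma decomp: "set xs \<subseteq> insert (g::'g::linordered_ab_group_add) mu \<Longrightarrow> \<exists>n ys. set ys \<subseteq> mu \<and> sum_list xs = sum_list (replicate n g) + sum_list ys"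
proof (induction xs)
  case Nil then show ?case by (auto intro!: exI[of _ 0] exI[of _ "[]"])
next
  case (Cons y xs)
  then obtain n ys where h: "set ys \<subseteq> mu" "sum_list xs = sum_list (replicate n g) + sum_list ys" by auto
  show ?case
  proof (cases "y = g")
    case True then show ?thesis using h by (auto intro!: exI[of _ "Suc n"] exI[of _ ys] simp: add.assoc)
  next
    case False
    have "sum_list (y # xs) = sum_list (replicate n g) + sum_list (y # ys)"
      using h(2) by (simp add: add_ac)
    then show ?thesis using h Cons.prems False by (intro exI[of _ n] exI[of _ "y # ys"]) auto
  qed
qed

lemma incsub: "\<exists>h. strict_mono h \<and> incseq (\<lambda>j. (s::nat\<Rightarrow>nat) (h j))"
proof -
  obtain f where f: "strict_mono f" "monoseq (\<lambda>n. s (f n))" using seq_monosub by blast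
  show ?thesis
  proof (cases "incseq (\<lambda>n. s (f n))")
    case True then show ?thesis using f by blast
  next
    case False
    then have dec: "\<And>m n. m \<le> n \<Longrightarrow> s (f n) \<le> s (f m)" using f(2) unfolding monoseq_def incseq_def by auto
    define v where "v = (LEAST v. v \<in> range (\<lambda>n. s (f n)))"
    obtain k0 where k0: "s (f k0) = v" unfolding v_def by (metis (mono_tags) LeastI rangeE rangeI)
    have ge: "\<And>k. v \<le> s (f k)" unfolding v_def by (simp add: Least_le)
    have c: "\<And>j. s (f (j + k0)) = v" using dec ge k0 by (metis le_add2 le_antisym)
    show ?thesis
      by (rule exI[of _ "\<lambda>j. f (j + k0)"]) (use f(1) c in \<open>auto simp: strict_mono_def incseq_def\<close>)
  qed
qed

lemma no_incr: "finite mu \<Longrightarrow> mu \<subseteq> {g. g < 0} \<Longrightarrow>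
  \<not>(\<exists>f. \<forall>i. f i \<in> mstar mu \<and> f i < f (Suc i))"
proof (induction mu rule: finite_induct)
  case empty
  have "mstar {} = {0}" unfolding mstar_def by auto
  then show ?case by (metis less_irrefl singletonD)
next
  case (insert g mu)
  show ?case
  proof
    assume "\<exists>f. \<forall>i. f i \<in> mstar (insert g mu) \<and> f i < f (Suc i)"
    then obtain f where f: "\<And>i. f i \<in> mstar (insert g mu)" "\<And>i. f i < f (Suc i)" by blast
    have "\<forall>i. \<exists>n m. m \<in> mstar mu \<and> f i = sum_list (replicate n g) + m"
    proof
      fix i
      obtain xs where "set xs \<subseteq> insert g mu" "f i = sum_list xs" using f(1)[of i] unfolding mstar_def by auto
      then obtain n ys where "set ys \<subseteq> mu" "f i = sum_list (replicate n g) + sum_list ys"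
        using decomp by metis
      then show "\<exists>n m. m \<in> mstar mu \<and> f i = sum_list (replicate n g) + m"
        by (intro exI[of _ n] exI[of _ "sum_list ys"]) (auto simp: mstar_def)
    qed
    then obtain N m where Nm: "\<And>i. m i \<in> mstar mu" "\<And>i. f i = sum_list (replicate (N i) g) + m i"
      by metis
    obtain h where h: "strict_mono h" "incseq (\<lambda>j. N (h j))" using incsub by blast
    have sm: "strict_mono f" using f(2) by (simp add: strict_mono_Suc_iff)
    have g0: "g \<le> 0" using insert.prems by auto
    have "\<forall>j. m (h j) \<in> mstar mu \<and> m (h j) < m (h (Suc j))"
    proof
      fix j
      have a: "f (h j) < f (h (Suc j))" using sm h(1) by (simp add: strict_mono_def)
      have b: "sum_list (replicate (N (h (Suc j))) g) \<le> sum_list (replicate (N (h j)) g)"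
        using rep_mono[OF g0] h(2) by (simp add: incseq_def)
      have e: "\<And>i. m i = f i + - sum_list (replicate (N i) g)" using Nm(2) by (simp add: algebra_simps)
      have "m (h j) < m (h (Suc j))" unfolding e
        by (rule add_less_le_mono[OF a]) (use b in simp)
      then show "m (h j) \<in> mstar mu \<and> m (h j) < m (h (Suc j))" using Nm(1) by simp
    qed
    then have ex: "\<exists>f. \<forall>j. f j \<in> mstar mu \<and> f j < f (Suc j)"
      by (intro exI[of _ "\<lambda>j. m (h j)"])
    have "mu \<subseteq> {g. g < 0}" using insert.prems by auto
    from insert.IH[OF this] ex show False by contradiction
  qed
qed

lemma has_max: assumes "ratio_set mu" "S \<subseteq> mstar mu" "x \<in> S"
  shows "\<exists>z\<in>S. \<forall>y\<in>S. y \<le> z"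
proof -
  let ?R = "{(y, x). x \<in> mstar mu \<and> y \<in> mstar mu \<and> x < y}"
  have "wf ?R"
  proof (unfold wf_iff_no_infinite_down_chain, rule notI)
    assume "\<exists>f. \<forall>i. (f (Suc i), f i) \<in> ?R"
    then obtain f where f: "\<forall>i. (f (Suc i), f i) \<in> ?R" by blast
    have "\<forall>i. f i \<in> mstar mu \<and> f i < f (Suc i)"
    proof
      fix i show "f i \<in> mstar mu \<and> f i < f (Suc i)" using spec[OF f, of i] by simp
    qed
    moreover have "finite mu" "mu \<subseteq> {g. g < 0}" using assms(1) unfolding ratio_set_def by auto
    ultimately show False using no_incr by blast
  qed
  from wfE_min[OF this assms(3)] obtain z where z: "z \<in> S" "\<And>y. (y, z) \<in> ?R \<Longrightarrow> y \<notin> S" by blast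
  have "\<forall>y\<in>S. y \<le> z"
  proof
    fix y assume y: "y \<in> S"
    show "y \<le> z"
    proof (rule ccontr)
      assume "\<not> y \<le> z"
      then have "z < y" by simp
      then have "(y, z) \<in> ?R" using y z(1) assms(2) by auto
      then show False using z(2) y by blast
    qed
  qed
  then show ?thesis using z(1) by blast
qed

lemma grid_max: assumes "grid_based T" "S \<subseteq> T" "x \<in> S"
  shows "\<exists>z\<in>S. \<forall>y\<in>S. y \<le> z"
proof -
  obtain mu n where mn: "ratio_set mu" "T \<subseteq> {n + m | m. m \<in> mstar mu}" using assms(1) grid_based_def by blast
  have sub: "(\<lambda>y. y - n) ` S \<subseteq> mstar mu"
  proof
    fix w assume "w \<in> (\<lambda>y. y - n) ` S"
    then obtain y where "y \<in> S" "w = y - n" by blast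
    then obtain m where "m \<in> mstar mu" "y = n + m" using mn(2) assms(2) by blast
    then show "w \<in> mstar mu" using \<open>w = y - n\<close> by simp
  qed
  have "x - n \<in> (\<lambda>y. y - n) ` S" using assms(3) by blast
  from has_max[OF mn(1) sub this] obtain z where z: "z \<in> (\<lambda>y. y - n) ` S" "\<forall>y\<in>(\<lambda>y. y - n) ` S. y \<le> z"
    by blast
  then obtain zz where zz: "zz \<in> S" "z = zz - n" by blast
  have "\<forall>y\<in>S. y \<le> zz"
  proof
    fix y assume "y \<in> S"
    then have "y - n \<le> zz - n" using z(2) zz(2) by blast
    then show "y \<le> zz" by simp
  qed
  then show ?thesis using zz(1) by blast
qed

theorem proposition3p8:
  fixes A1 A2 B1 B2 :: "'g::linordered_ab_group_add \<Rightarrow> real"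
    and mu :: "'g set"
  assumes "gb_series A1" and "gb_series A2" and "gb_series B1" and "gb_series B2"
    and "ratio_set mu"
    and "ser_prec mu A1 A2"
    and "ser_prec mu B1 B2"
    and "witnesses mu B2"
  shows "ser_prec mu (ser_mult A1 B1) (ser_mult A2 B2)"
proof (unfold ser_prec_def, intro ballI)
  fix x assume x: "x \<in> supp (ser_mult A1 B1)"
  let ?I = "{(a, b). a \<in> supp A1 \<and> b \<in> supp B1 \<and> a + b = x}"
  have "?I \<noteq> {}"
  proof
    assume "?I = {}"
    then have "ser_mult A1 B1 x = 0" unfolding ser_mult_def by (simp only: sum.empty)
    then show False using x by (simp add: supp_def)
  qed
  then obtain a1 b1 where ab1: "a1 \<in> supp A1" "b1 \<in> supp B1" "a1 + b1 = x" by auto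
  obtain a2 where a2: "a2 \<in> supp A2" "a1 - a2 \<in> mplus mu"
    using assms(6) ab1(1) unfolding ser_prec_def mono_prec_def by blast
  obtain b2 where b2: "b2 \<in> supp B2" "b1 - b2 \<in> mplus mu"
    using assms(7) ab1(2) unfolding ser_prec_def mono_prec_def by blast
  define M where "M = mag B2"
  have wit: "\<And>b. b \<in> supp B2 \<Longrightarrow> b - M \<in> mstar mu"
  proof -
    fix b assume "b \<in> supp B2"
    then obtain m where "m \<in> mstar mu" "b = M + m" using assms(8) unfolding witnesses_def M_def by blast
    then show "b - M \<in> mstar mu" by simp
  qed
  obtain z where z: "z \<in> supp B2" "\<forall>y\<in>supp B2. y \<le> z"
    using grid_max[of "supp B2" "supp B2" b2] assms(4) b2(1) unfolding gb_series_def by blast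
  have "M = z" unfolding M_def mag_def using z by (intro Greatest_equality) auto
  then have M: "M \<in> supp B2" using z by simp
  define T where "T = {a \<in> supp A2. a1 - a \<in> mstar mu}"
  have "a1 - a2 \<in> mstar mu" using a2(2) unfolding mplus_def mstar_def by blast
  then have "a2 \<in> T" unfolding T_def using a2(1) by blast
  then obtain as where as: "as \<in> T" "\<forall>y\<in>T. y \<le> as"
    using grid_max[of "supp A2" T a2] assms(2) unfolding gb_series_def T_def by blast
  let ?J = "{(a, b). a \<in> supp A2 \<and> b \<in> supp B2 \<and> a + b = as + M}"
  have J: "?J = {(as, M)}"
  proof (intro set_eqI iffI)
    fix p assume "p \<in> ?J"
    then obtain a b where p: "p = (a, b)" "a \<in> supp A2" "b \<in> supp B2" "a + b = as + M" by auto
    have h1: "b - M \<in> mstar mu" using wit p(3) .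
    have h2: "a1 - as \<in> mstar mu" using as(1) T_def by auto
    have "a = as + M - b" using p(4) by (simp add: eq_diff_eq)
    then have e: "a1 - a = (a1 - as) + (b - M)" by (simp add: algebra_simps)
    have "a1 - a \<in> mstar mu" unfolding e using mstar_add[OF h2 h1] .
    then have "a \<in> T" using p(2) T_def by auto
    then have "a \<le> as" using as(2) by auto
    moreover have "b \<le> M" using z(2) p(3) \<open>M = z\<close> by auto
    ultimately have "a = as"
    proof -
      assume l: "a \<le> as" "b \<le> M"
      show "a = as"
      proof (rule ccontr)
        assume "a \<noteq> as"
        then have "a < as" using l(1) by simp
        then have "a + b < as + M" using add_less_le_mono l(2) by blast
        then show False using p(4) by simp
      qed
    qed
    then have "a = as \<and> b = M" using p(4) by simp
    then show "p \<in> {(as, M)}" using p(1) by simp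
  next
    fix p assume "p \<in> {(as, M)}"
    then show "p \<in> ?J" using as(1) M T_def by auto
  qed
  have "ser_mult A2 B2 (as + M) = A2 as * B2 M" unfolding ser_mult_def J by simp
  moreover have "A2 as \<noteq> 0" "B2 M \<noteq> 0" using as(1) M unfolding T_def supp_def by auto
  ultimately have c: "as + M \<in> supp (ser_mult A2 B2)" unfolding supp_def by simp
  have "x - (as + M) = (b1 - b2) + ((a1 - as) + (b2 - M))"
    using ab1(3) by (simp add: algebra_simps)
  moreover have "(a1 - as) + (b2 - M) \<in> mstar mu"
    using as(1) T_def wit b2(1) mstar_add by blast
  ultimately have "x - (as + M) \<in> mplus mu" using mplus_add b2(2) by metis
  then show "\<exists>b\<in>supp (ser_mult A2 B2). mono_prec mu x b" using c mono_prec_def by blast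
qed

end
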